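(* Let $(B,\cdot,+,-,{}^{-1},0)$ be a right near-domain (as defined in the context), with $B_1=B\setminus\{0\}$, identity $e$ of the group $B_1$, $L(x)=0-x$ for $x\in B_1$, and let $h,r,v$ be elements as in axioms A5, A6, A7. Then: 1. $0\cdot x=0$ for every $x\in B_1$; 2. $h(x,y)=(L(x))^{-1}L(xy)$ for all $x,y\in B_1$; 3. for all $y,z\in B_1$ with $y+z\neq 0$, one has $L(z)-y\neq 0$ and $r(y,z)=(L(z)-y)^{-1}L(y+z)$; 4. $x-z=x\,(v(z))^{-1}+L(z)$ for all $x\in B$, $z\in B_1$; 5. $v(z)=(L(L(z)))^{-1}z$ for all $z\in B_1$.
   Context: A right near-domain is a set $B$ with a distinguished element $0\in B$, where $B_1:=B\setminus\{0\}$, together with maps $+:B\times B_1\to B$, $-:B\times B_1\to B$, $\cdot:B\times B_1\to B$ and ${}^{-1}:B_1\to B_1$, satisfying: A1. $(x-y)+y=x$ for all $x\in B$, $y\in B_1$; A2. $(x+y)-y=x$ for all $x\in B$, $y\in B_1$; A3. $x-x=0$ for all $x\in B_1$; A4. $B_1$ is closed under $\cdot$ and $(B_1,\cdot,{}^{-1})$ is a group, with identity element $e\in B_1$; A5. for all $y,z\in B_1$ there is $h(y,z)\in B_1$ such that $(x+y)z=x\,h(y,z)+yz$ for all $x\in B$; A6. for all $y,z\in B_1$ with $y+z\neq 0$ there is $r(y,z)\in B_1$ such that $(x+y)+z=x\,r(y,z)+(y+z)$ for all $x\in B$; A7. for all $z\in B_1$ there is $v(z)\in B_1$ such that $(x+(0-z))+z=x\,v(z)$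 for all $x\in B$ (it follows from A1–A3 that $0-z\neq 0$, so the left side is defined). Notation: $L(x)=0-x$ for $x\in B_1$ (so $L:B_1\to B_1$), and $xy$ denotes $x\cdot y$. *)

theory Defs
  imports Main
begin

text \<open>The partial operations on B x B1 (B1 = B - {z}) are modelled as total HOL functions;
  the axioms only constrain them on the intended domains.\<close>

definition right_near_domain ::
  "'a set \<Rightarrow> 'a \<Rightarrow> ('a \<Rightarrow> 'a \<Rightarrow> 'a) \<Rightarrow> ('a \<Rightarrow> 'a \<Rightarrow> 'a) \<Rightarrow> ('a \<Rightarrow> 'a \<Rightarrow> 'a)
     \<Rightarrow> ('a \<Rightarrow> 'a) \<Rightarrow> 'a \<Rightarrow> bool" where
  "right_near_domain B z add sub mul iv e \<longleftrightarrow>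
     z \<in> B \<and>
     \<comment> \<open>closure of the maps +, -, \<cdot> : B x B1 -> B and inverse : B1 -> B1\<close>
     (\<forall>x\<in>B. \<forall>y\<in>B - {z}. add x y \<in> B \<and> sub x y \<in> B \<and> mul x y \<in> B) \<and>
     (\<forall>x\<in>B - {z}. iv x \<in> B - {z}) \<and>
     \<comment> \<open>A1, A2\<close>
     (\<forall>x\<in>B. \<forall>y\<in>B - {z}. add (sub x y) y = x) \<and>
     (\<forall>x\<in>B. \<forall>y\<in>B - {z}. sub (add x y) y = x) \<and>
     \<comment> \<open>A3\<close>
     (\<forall>x\<in>B - {z}. sub x x = z) \<and>
     \<comment> \<open>A4: (B1, \<cdot>, iv) is a group with identity e\<close>
     (\<forall>x\<in>B - {z}. \<forall>y\<in>B - {z}. mul x y \<in> B - {z}) \<and>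
     (\<forall>x\<in>B - {z}. \<forall>y\<in>B - {z}. \<forall>w\<in>B - {z}. mul (mul x y) w = mul x (mul y w)) \<and>
     e \<in> B - {z} \<and>
     (\<forall>x\<in>B - {z}. mul e x = x \<and> mul x e = x) \<and>
     (\<forall>x\<in>B - {z}. mul (iv x) x = e \<and> mul x (iv x) = e) \<and>
     \<comment> \<open>A5\<close>
     (\<forall>y\<in>B - {z}. \<forall>w\<in>B - {z}. \<exists>hh\<in>B - {z}.
         \<forall>x\<in>B. mul (add x y) w = add (mul x hh) (mul y w)) \<and>
     \<comment> \<open>A6\<close>
     (\<forall>y\<in>B - {z}. \<forall>w\<in>B - {z}. add y w \<noteq> z \<longrightarrow> (\<exists>rr\<in>B - {z}.
         \<forall>x\<in>B. add (add x y) w = add (mul x rr) (add y w))) \<and>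
     \<comment> \<open>A7\<close>
     (\<forall>w\<in>B - {z}. \<exists>vv\<in>B - {z}. \<forall>x\<in>B. add (add x (sub z w)) w = mul x vv)"

end

theory Submission
  imports Defs
begin

theorem mainTheorem1:
  fixes B :: "'a set" and z e :: 'a
    and add sub mul :: "'a \<Rightarrow> 'a \<Rightarrow> 'a" and iv :: "'a \<Rightarrow> 'a"
    and h r :: "'a \<Rightarrow> 'a \<Rightarrow> 'a" and v :: "'a \<Rightarrow> 'a"
  assumes rnd: "right_near_domain B z add sub mul iv e"
    and h: "\<And>y w. y \<in> B - {z} \<Longrightarrow> w \<in> B - {z} \<Longrightarrow> h y w \<in> B - {z} \<and>
              (\<forall>x\<in>B. mul (add x y) w = add (mul x (h y w)) (mul y w))"
    and r: "\<And>y w. y \<in> B - {z} \<Longrightarrow> w \<in> B - {z} \<Longrightarrow> add y w \<noteq> z \<Longrightarrow> r y w \<in> B - {z} \<and>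
              (\<forall>x\<in>B. add (add x y) w = add (mul x (r y w)) (add y w))"
    and v: "\<And>w. w \<in> B - {z} \<Longrightarrow> v w \<in> B - {z} \<and>
              (\<forall>x\<in>B. add (add x (sub z w)) w = mul x (v w))"
  defines "L \<equiv> (\<lambda>x. sub z x)"
  shows "(\<forall>x\<in>B - {z}. mul z x = z)
    \<and> (\<forall>x\<in>B - {z}. \<forall>y\<in>B - {z}. h x y = mul (iv (L x)) (L (mul x y)))
    \<and> (\<forall>y\<in>B - {z}. \<forall>w\<in>B - {z}. add y w \<noteq> z \<longrightarrow>
          sub (L w) y \<noteq> z \<and> r y w = mul (iv (sub (L w) y)) (L (add y w)))
    \<and> (\<forall>x\<in>B. \<forall>w\<in>B - {z}. sub x w = add (mul x (iv (v w))) (L w))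
    \<and> (\<forall>w\<in>B - {z}. v w = mul (iv (L (L w))) w)"
proof -
  note D = rnd[unfolded right_near_domain_def]
  have DDz: "z \<in> B" using D by (elim conjE) assumption
  have DD0: "(\<forall>x\<in>B. \<forall>y\<in>B - {z}. add x y \<in> B \<and> sub x y \<in> B \<and> mul x y \<in> B)" using D by (elim conjE) assumption
  have DD1: "(\<forall>x\<in>B - {z}. iv x \<in> B - {z})" using D by (elim conjE) assumption
  have DD2: "(\<forall>x\<in>B. \<forall>y\<in>B - {z}. add (sub x y) y = x)" using D by (elim conjE) assumption
  have DD3: "(\<forall>x\<in>B. \<forall>y\<in>B - {z}. sub (add x y) y = x)" using D by (elim conjE) assumption
  have DD4: "(\<forall>x\<in>B - {z}. sub x x = z)" using D by (elim conjE) assumption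
  have DD5: "(\<forall>x\<in>B - {z}. \<forall>y\<in>B - {z}. mul x y \<in> B - {z})" using D by (elim conjE) assumption
  have DD6: "(\<forall>x\<in>B - {z}. \<forall>y\<in>B - {z}. \<forall>w\<in>B - {z}. mul (mul x y) w = mul x (mul y w))" using D by (elim conjE) assumption
  have DD7e: "e \<in> B - {z}" using D by (elim conjE) assumption
  have DD7: "(\<forall>x\<in>B - {z}. mul e x = x \<and> mul x e = x)" using D by (elim conjE) assumption
  have DD8: "(\<forall>x\<in>B - {z}. mul (iv x) x = e \<and> mul x (iv x) = e)" using D by (elim conjE) assumption
  have DD9: "(\<forall>y\<in>B - {z}. \<forall>w\<in>B - {z}. \<exists>hh\<in>B - {z}. \<forall>x\<in>B. mul (add x y) w = add (mul x hh) (mul y w))" using D by (elim conjE) assumption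
  have DD10: "(\<forall>y\<in>B - {z}. \<forall>w\<in>B - {z}. add y w \<noteq> z \<longrightarrow> (\<exists>rr\<in>B - {z}. \<forall>x\<in>B. add (add x y) w = add (mul x rr) (add y w)))" using D by (elim conjE) assumption
  have DD11: "(\<forall>w\<in>B - {z}. \<exists>vv\<in>B - {z}. \<forall>x\<in>B. add (add x (sub z w)) w = mul x vv)" using D by (elim conjE) assumption
  have zB: "z \<in> B" using DDz by blast
  have cl: "\<And>x y. x \<in> B \<Longrightarrow> y \<in> B - {z} \<Longrightarrow> add x y \<in> B \<and> sub x y \<in> B \<and> mul x y \<in> B"
    using DD0 by blast
  have ivB: "\<And>x. x \<in> B - {z} \<Longrightarrow> iv x \<in> B - {z}" using DD1 by blast
  have A1: "\<And>x y. x \<in> B \<Longrightarrow> y \<in> B - {z} \<Longrightarrow> add (sub x y) y = x" using DD2 by blast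
  have A2: "\<And>x y. x \<in> B \<Longrightarrow> y \<in> B - {z} \<Longrightarrow> sub (add x y) y = x" using DD3 by blast
  have A3: "\<And>x. x \<in> B - {z} \<Longrightarrow> sub x x = z" using DD4 by blast
  have mB1: "\<And>x y. x \<in> B - {z} \<Longrightarrow> y \<in> B - {z} \<Longrightarrow> mul x y \<in> B - {z}" using DD5 by blast
  have assoc: "\<And>x y w. x \<in> B - {z} \<Longrightarrow> y \<in> B - {z} \<Longrightarrow> w \<in> B - {z} \<Longrightarrow>
      mul (mul x y) w = mul x (mul y w)" using DD6 by blast
  have eB: "e \<in> B - {z}" using DD7e by blast
  have unit: "\<And>x. x \<in> B - {z} \<Longrightarrow> mul e x = x \<and> mul x e = x" using DD7 by blast
  have inv: "\<And>x. x \<in> B - {z} \<Longrightarrow> mul (iv x) x = e \<and> mul x (iv x) = e" using DD8 by blast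
  have canc: "\<And>a b y. a \<in> B \<Longrightarrow> b \<in> B \<Longrightarrow> y \<in> B - {z} \<Longrightarrow> add a y = add b y \<Longrightarrow> a = b"
  proof -
    fix a b y assume a: "a \<in> B" and b: "b \<in> B" and y: "y \<in> B - {z}" and eq: "add a y = add b y"
    from A2[OF a y] A2[OF b y] eq show "a = b" by metis
  qed
  have zadd: "\<And>y. y \<in> B - {z} \<Longrightarrow> add z y = y"
  proof -
    fix y assume y: "y \<in> B - {z}"
    then have yB: "y \<in> B" by blast
    from A1[OF yB y] A3[OF y] show "add z y = y" by metis
  qed
  have sum0: "\<And>a y. a \<in> B \<Longrightarrow> y \<in> B - {z} \<Longrightarrow> add a y = z \<Longrightarrow> a = L y"
  proof -
    fix a y assume a: "a \<in> B" and y: "y \<in> B - {z}" and eq: "add a y = z"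
    from A2[OF a y] eq show "a = L y" unfolding L_def by metis
  qed
  have LB: "\<And>y. y \<in> B - {z} \<Longrightarrow> L y \<in> B - {z}"
  proof -
    fix y assume y: "y \<in> B - {z}"
    have LyB: "L y \<in> B" using cl[OF zB y] unfolding L_def by blast
    have "L y \<noteq> z"
    proof
      assume Lz: "L y = z"
      have "add (L y) y = z" using A1[OF zB y] unfolding L_def .
      then have "add z y = z" by (simp only: Lz)
      moreover have "add z y = y" by (rule zadd[OF y])
      ultimately have "y = z" by simp
      with y show False by blast
    qed
    with LyB show "L y \<in> B - {z}" by blast
  qed
  have Ladd: "\<And>y. y \<in> B - {z} \<Longrightarrow> add (L y) y = z"
    unfolding L_def using A1[OF zB] by simp
  have solve: "\<And>a x c. a \<in> B - {z} \<Longrightarrow> x \<in> B - {z} \<Longrightarrow> mul a x = c \<Longrightarrow> x = mul (iv a) c"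
  proof -
    fix a x c assume a: "a \<in> B - {z}" and x: "x \<in> B - {z}" and c: "mul a x = c"
    have "mul (iv a) c = mul (mul (iv a) a) x" using assoc[OF ivB[OF a] a x] c by simp
    also have "\<dots> = x" using inv[OF a] unit[OF x] by simp
    finally show "x = mul (iv a) c" by simp
  qed
  have P1: "\<And>w. w \<in> B - {z} \<Longrightarrow> mul z w = z"
  proof (rule ccontr)
    fix w assume w: "w \<in> B - {z}" and ne: "mul z w \<noteq> z"
    define a where "a = mul z w"
    have aB: "a \<in> B" unfolding a_def using cl[OF zB w] by blast
    have a: "a \<in> B - {z}" using aB ne unfolding a_def by blast
    define hh where "hh = h e w"
    have hh: "hh \<in> B - {z}" and H: "\<forall>x\<in>B. mul (add x e) w = add (mul x hh) (mul e w)"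
      using h[OF eB w] unfolding hh_def by auto
    have ew: "mul e w = w" using unit[OF w] by blast
    have ze: "add z e = e" by (rule zadd[OF eB])
    have zhB: "mul z hh \<in> B" using cl[OF zB hh] by blast
    have zh: "mul z hh = z"
    proof -
      have "mul (add z e) w = add (mul z hh) (mul e w)" using H zB by blast
      then have "w = add (mul z hh) w" unfolding ze ew .
      then have "add z w = add (mul z hh) w" using zadd[OF w] by metis
      from canc[OF zB zhB w this] show ?thesis by metis
    qed
    define b where "b = mul a (iv w)"
    have b: "b \<in> B - {z}" unfolding b_def using mB1[OF a ivB[OF w]] .
    have bB: "b \<in> B" using b by blast
    define x' where "x' = sub b e"
    have x'B: "x' \<in> B" unfolding x'_def using cl[OF bB eB] by blast
    have x'e: "add x' e = b" unfolding x'_def using A1[OF bB eB] .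
    have bw: "mul b w = a"
    proof -
      have "mul b w = mul a (mul (iv w) w)" unfolding b_def by (rule assoc[OF a ivB[OF w] w])
      also have "\<dots> = mul a e" using inv[OF w] by metis
      also have "\<dots> = a" using unit[OF a] by metis
      finally show ?thesis .
    qed
    have LeB: "L e \<in> B - {z}" by (rule LB[OF eB])
    have LeB': "L e \<in> B" using LeB by blast
    have "mul (add (L e) e) w = a" unfolding Ladd[OF eB] a_def ..
    moreover have "mul (add (L e) e) w = add (mul (L e) hh) (mul e w)" using H LeB' by blast
    moreover have "mul (add x' e) w = add (mul x' hh) (mul e w)" using H x'B by blast
    moreover have "mul (add x' e) w = a" using x'e bw by metis
    ultimately have "add (mul (L e) hh) w = add (mul x' hh) w" using ew by metis
    moreover have "mul (L e) hh \<in> B" using cl[OF LeB' hh] by blast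
    moreover have "mul x' hh \<in> B" using cl[OF x'B hh] by blast
    ultimately have eq: "mul (L e) hh = mul x' hh" using canc w by blast
    have Lh: "mul (L e) hh \<in> B - {z}" by (rule mB1[OF LeB hh])
    have x'z: "x' \<noteq> z"
    proof
      assume "x' = z"
      then have "mul (L e) hh = z" using eq zh by metis
      then show False using Lh by blast
    qed
    then have x'1: "x' \<in> B - {z}" using x'B by blast
    have "x' = L e"
    proof -
      have "mul (mul (L e) hh) (iv hh) = mul (L e) (mul hh (iv hh))" by (rule assoc[OF LeB hh ivB[OF hh]])
      also have "\<dots> = L e" using inv[OF hh] unit[OF LeB] by metis
      finally have 1: "mul (mul (L e) hh) (iv hh) = L e" .
      have "mul (mul x' hh) (iv hh) = mul x' (mul hh (iv hh))" by (rule assoc[OF x'1 hh ivB[OF hh]])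
      also have "\<dots> = x'" using inv[OF hh] unit[OF x'1] by metis
      finally have 2: "mul (mul x' hh) (iv hh) = x'" .
      from 1 2 eq show ?thesis by metis
    qed
    then have "b = z" using x'e Ladd[OF eB] by metis
    then show False using b by blast
  qed
  have P2: "\<And>x y. x \<in> B - {z} \<Longrightarrow> y \<in> B - {z} \<Longrightarrow> h x y = mul (iv (L x)) (L (mul x y))"
  proof -
    fix x y assume x: "x \<in> B - {z}" and y: "y \<in> B - {z}"
    have hh: "h x y \<in> B - {z}" and H: "\<forall>t\<in>B. mul (add t x) y = add (mul t (h x y)) (mul x y)"
      using h[OF x y] by auto
    have LxB: "L x \<in> B" using LB[OF x] by blast
    have "mul (add (L x) x) y = add (mul (L x) (h x y)) (mul x y)" using H LxB by blast
    then have "add (mul (L x) (h x y)) (mul x y) = z" unfolding Ladd[OF x] P1[OF y] by (rule sym)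
    moreover have "mul (L x) (h x y) \<in> B" using mB1[OF LB[OF x] hh] by blast
    ultimately have "mul (L x) (h x y) = L (mul x y)" using sum0 mB1[OF x y] by blast
    then show "h x y = mul (iv (L x)) (L (mul x y))" using solve[OF LB[OF x] hh] by blast
  qed
  have P3: "\<And>y w. y \<in> B - {z} \<Longrightarrow> w \<in> B - {z} \<Longrightarrow> add y w \<noteq> z \<Longrightarrow>
          sub (L w) y \<noteq> z \<and> r y w = mul (iv (sub (L w) y)) (L (add y w))"
  proof -
    fix y w assume y: "y \<in> B - {z}" and w: "w \<in> B - {z}" and yw: "add y w \<noteq> z"
    have rr: "r y w \<in> B - {z}" and R: "\<forall>t\<in>B. add (add t y) w = add (mul t (r y w)) (add y w)"
      using r[OF y w yw] by auto
    have yB: "y \<in> B" using y by blast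
    have ywB: "add y w \<in> B - {z}" using cl[OF yB w] yw by blast
    have LwB: "L w \<in> B" using LB[OF w] by blast
    define x where "x = sub (L w) y"
    have xB: "x \<in> B" unfolding x_def using cl[OF LwB y] by blast
    have xy: "add x y = L w" unfolding x_def by (rule A1[OF LwB y])
    have "add (add x y) w = add (mul x (r y w)) (add y w)" using R xB by blast
    then have "add (mul x (r y w)) (add y w) = z" unfolding xy Ladd[OF w] by (rule sym)
    moreover have "mul x (r y w) \<in> B" using cl[OF xB rr] by blast
    ultimately have xr: "mul x (r y w) = L (add y w)" using sum0 ywB by blast
    have xz: "x \<noteq> z"
    proof
      assume "x = z"
      then have "L (add y w) = z" using xr P1[OF rr] by metis
      then show False using LB[OF ywB] by blast
    qed
    then have x1: "x \<in> B - {z}" using xB by blast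
    have "r y w = mul (iv x) (L (add y w))" by (rule solve[OF x1 rr xr])
    then show "sub (L w) y \<noteq> z \<and> r y w = mul (iv (sub (L w) y)) (L (add y w))"
      using xz unfolding x_def by blast
  qed
  have P4: "\<And>x w. x \<in> B \<Longrightarrow> w \<in> B - {z} \<Longrightarrow> sub x w = add (mul x (iv (v w))) (L w)"
  proof -
    fix x w assume x: "x \<in> B" and w: "w \<in> B - {z}"
    have vv: "v w \<in> B - {z}" and V: "\<forall>t\<in>B. add (add t (L w)) w = mul t (v w)"
      using v[OF w] unfolding L_def by auto
    define t where "t = mul x (iv (v w))"
    have tB: "t \<in> B" unfolding t_def using cl[OF x ivB[OF vv]] by blast
    have tv: "mul t (v w) = x"
    proof (cases "x = z")
      case True
      have "mul t (v w) = mul z (v w)" unfolding t_def True P1[OF ivB[OF vv]] ..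
      then show ?thesis using P1[OF vv] True by metis
    next
      case False
      then have x1: "x \<in> B - {z}" using x by blast
      have "mul t (v w) = mul x (mul (iv (v w)) (v w))" unfolding t_def by (rule assoc[OF x1 ivB[OF vv] vv])
      then show ?thesis using inv[OF vv] unit[OF x1] by metis
    qed
    have tLB: "add t (L w) \<in> B" using cl[OF tB LB[OF w]] by blast
    have "add (add t (L w)) w = x" using V tB tv by metis
    then have "sub x w = add t (L w)" using A2[OF tLB w] by metis
    then show "sub x w = add (mul x (iv (v w))) (L w)" unfolding t_def .
  qed
  have P5: "\<And>w. w \<in> B - {z} \<Longrightarrow> v w = mul (iv (L (L w))) w"
  proof -
    fix w assume w: "w \<in> B - {z}"
    have vv: "v w \<in> B - {z}" and V: "\<forall>t\<in>B. add (add t (L w)) w = mul t (v w)"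
      using v[OF w] unfolding L_def by auto
    have LL: "L (L w) \<in> B - {z}" using LB[OF LB[OF w]] .
    have LLB: "L (L w) \<in> B" using LL by blast
    have "add (add (L (L w)) (L w)) w = mul (L (L w)) (v w)" using V LLB by blast
    then have "mul (L (L w)) (v w) = w" unfolding Ladd[OF LB[OF w]] zadd[OF w] by (rule sym)
    then show "v w = mul (iv (L (L w))) w" by (rule solve[OF LL vv])
  qed
  have Q1: "\<forall>x\<in>B - {z}. mul z x = z" using P1 by (intro ballI)
  have Q2: "\<forall>x\<in>B - {z}. \<forall>y\<in>B - {z}. h x y = mul (iv (L x)) (L (mul x y))"
    using P2 by (intro ballI)
  have Q3: "\<forall>y\<in>B - {z}. \<forall>w\<in>B - {z}. add y w \<noteq> z \<longrightarrow>
          sub (L w) y \<noteq> z \<and> r y w = mul (iv (sub (L w) y)) (L (add y w))"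
    using P3 by (intro ballI impI)
  have Q4: "\<forall>x\<in>B. \<forall>w\<in>B - {z}. sub x w = add (mul x (iv (v w))) (L w)"
    using P4 by (intro ballI)
  have Q5: "\<forall>w\<in>B - {z}. v w = mul (iv (L (L w))) w" using P5 by (intro ballI)
  from Q1 Q2 Q3 Q4 Q5 show ?thesis by (intro conjI)
qed

end
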